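(* Let $k\ge 1$, let $G=K_2\vee\overline{K_k}$, and let $v$ be a vertex of degree $2$ in $G$. If $p\ge\max\{4,\Delta(G)\}$, then $G$ is $f_{p,v}$-edge-orientable.
   Context: $G_1\vee G_2$ denotes the join: the disjoint union of $G_1$ and $G_2$ plus all edges between them. $\overline{K_k}$ is the edgeless graph on $k$ vertices. An orientation of a graph $H$ is any digraph obtained by replacing each edge $uv$ with the arc $(u,v)$, with the arc $(v,u)$, or with both arcs. A kernel of a digraph $D$ is an independent set $S$ such that every vertex of $D-S$ has an out-neighbor in $S$. $D$ is kernel-perfect if every induced subdigraph of $D$ has a kernel. For $f:V(H)\to\mathbb{N}$, an orientation $D$ of $H$ is $f$-kernel-perfect if it is kernel-perfect and $f(v)\ge 1+d^+_D(v)$ for all $v$. For $f:E(G)\to\mathbb{N}$, $G$ is $f$-edge-orientable if its line graph $L(G)$ admits an $f$-kernel-perfect orientation. For $v\in V(G)$, define $f_{p,v}:E(G)\to\mathbb{N}$ by $f_{p,v}(e)=d_G(v)$ if $e$ is incident to $v$, and $f_{p,v}(e)=p$ otherwise. *)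

theory Defs
  imports Main
begin

type_synonym 'a graph = "'a set \<times> 'a set set"

definition gverts :: "'a graph \<Rightarrow> 'a set" where "gverts G = fst G"
definition gedges :: "'a graph \<Rightarrow> 'a set set" where "gedges G = snd G"

definition degree :: "'a set set \<Rightarrow> 'a \<Rightarrow> nat" where
  "degree E v = card {e \<in> E. v \<in> e}"

definition maxdeg :: "'a graph \<Rightarrow> nat" where
  "maxdeg G = Max ((degree (gedges G)) ` gverts G)"

definition gjoin :: "'a graph \<Rightarrow> 'b graph \<Rightarrow> ('a + 'b) graph" where
  "gjoin G1 G2 =
     (Inl ` gverts G1 \<union> Inr ` gverts G2,
      (\<lambda>e. Inl ` e) ` gedges G1 \<union> (\<lambda>e. Inr ` e) ` gedges G2 \<union>
      {{Inl x, Inr y} | x y. x \<in> gverts G1 \<and> y \<in> gverts G2})"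

definition K2 :: "nat graph" where "K2 = ({0, 1}, {{0, 1}})"

definition edgeless :: "nat \<Rightarrow> nat graph" where "edgeless k = ({0..<k}, {})"

definition line_adj :: "'a set set \<Rightarrow> 'a set \<Rightarrow> 'a set \<Rightarrow> bool" where
  "line_adj E e f \<longleftrightarrow> e \<in> E \<and> f \<in> E \<and> e \<noteq> f \<and> e \<inter> f \<noteq> {}"

definition is_orientation :: "'b set \<Rightarrow> ('b \<Rightarrow> 'b \<Rightarrow> bool) \<Rightarrow> ('b \<times> 'b) set \<Rightarrow> bool" where
  "is_orientation V adj D \<longleftrightarrow>
     (\<forall>x y. (x, y) \<in> D \<longrightarrow> x \<in> V \<and> y \<in> V \<and> adj x y) \<and>
     (\<forall>x\<in>V. \<forall>y\<in>V. adj x y \<longrightarrow> (x, y) \<in> D \<or> (y, x) \<in> D)"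

definition is_kernel :: "('b \<times> 'b) set \<Rightarrow> 'b set \<Rightarrow> 'b set \<Rightarrow> bool" where
  "is_kernel D S K \<longleftrightarrow> K \<subseteq> S \<and> (\<forall>x\<in>K. \<forall>y\<in>K. (x, y) \<notin> D) \<and>
     (\<forall>x\<in>S - K. \<exists>y\<in>K. (x, y) \<in> D)"

definition kernel_perfect :: "'b set \<Rightarrow> ('b \<times> 'b) set \<Rightarrow> bool" where
  "kernel_perfect V D \<longleftrightarrow> (\<forall>S\<subseteq>V. \<exists>K. is_kernel D S K)"

definition outdeg :: "'b set \<Rightarrow> ('b \<times> 'b) set \<Rightarrow> 'b \<Rightarrow> nat" where
  "outdeg V D x = card {y \<in> V. (x, y) \<in> D}"

definition f_kernel_perfect_orientation ::
  "'b set \<Rightarrow> ('b \<Rightarrow> 'b \<Rightarrow> bool) \<Rightarrow> ('b \<Rightarrow> nat) \<Rightarrow> ('b \<times> 'b) set \<Rightarrow> bool" where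
  "f_kernel_perfect_orientation V adj f D \<longleftrightarrow>
     is_orientation V adj D \<and> kernel_perfect V D \<and> (\<forall>x\<in>V. f x \<ge> 1 + outdeg V D x)"

definition edge_orientable :: "'a graph \<Rightarrow> ('a set \<Rightarrow> nat) \<Rightarrow> bool" where
  "edge_orientable G f \<longleftrightarrow>
     (\<exists>D. f_kernel_perfect_orientation (gedges G) (line_adj (gedges G)) f D)"

definition f_pv :: "'a graph \<Rightarrow> nat \<Rightarrow> 'a \<Rightarrow> 'a set \<Rightarrow> nat" where
  "f_pv G p v e = (if v \<in> e then degree (gedges G) v else p)"

end

theory Submission
  imports Defs
begin


lemma transfer:
  assumes inj: "inj_on h V'" and img: "h ` V' = V"
  and Dsub: "D' \<subseteq> V' \<times> V'"
  and adj: "\<And>x y. x \<in> V' \<Longrightarrow> y \<in> V' \<Longrightarrow> adj (h x) (h y) = adj' x y"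
  and fk: "f_kernel_perfect_orientation V' adj' (f \<circ> h) D'"
  shows "f_kernel_perfect_orientation V adj f (map_prod h h ` D')"
proof -
  have o: "is_orientation V' adj' D'" and kp: "kernel_perfect V' D'"
    and od: "\<forall>x\<in>V'. (f \<circ> h) x \<ge> 1 + outdeg V' D' x"
    using fk unfolding f_kernel_perfect_orientation_def by auto
  have img2: "\<And>a b. (h a, h b) \<in> map_prod h h ` D' \<Longrightarrow> a \<in> V' \<Longrightarrow> b \<in> V' \<Longrightarrow> (a,b) \<in> D'"
  proof -
    fix a b assume "(h a, h b) \<in> map_prod h h ` D'" "a \<in> V'" "b \<in> V'"
    then obtain a' b' where ab: "(a',b') \<in> D'" "h a' = h a" "h b' = h b" by auto
    then have "a' \<in> V'" "b' \<in> V'" using Dsub by auto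
    then have "a' = a" "b' = b" using ab inj \<open>a \<in> V'\<close> \<open>b \<in> V'\<close> by (auto dest: inj_onD)
    then show "(a,b) \<in> D'" using ab by simp
  qed
  have "is_orientation V adj (map_prod h h ` D')"
    unfolding is_orientation_def
  proof (rule conjI; intro allI impI ballI)
    fix x y assume "(x, y) \<in> map_prod h h ` D'"
    then obtain a b where ab: "(a,b) \<in> D'" "x = h a" "y = h b" by auto
    then have "a \<in> V'" "b \<in> V'" "adj' a b" using o Dsub unfolding is_orientation_def by auto
    moreover have "adj (h a) (h b)" using adj[of a b] \<open>a \<in> V'\<close> \<open>b \<in> V'\<close> \<open>adj' a b\<close> by blast
    moreover have "x \<in> V" "y \<in> V" using ab img \<open>a \<in> V'\<close> \<open>b \<in> V'\<close> by auto
    ultimately show "x \<in> V \<and> y \<in> V \<and> adj x y" using ab by simp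
  next
    fix x y assume "x \<in> V" "y \<in> V" "adj x y"
    then obtain a b where ab: "a \<in> V'" "b \<in> V'" "x = h a" "y = h b" using img by auto
    then have "adj' a b" using adj[OF ab(1,2)] \<open>adj x y\<close> by simp
    then have "(a,b) \<in> D' \<or> (b,a) \<in> D'" using o ab unfolding is_orientation_def by auto
    then show "(x, y) \<in> map_prod h h ` D' \<or> (y, x) \<in> map_prod h h ` D'"
    proof
      assume "(a,b) \<in> D'" then have "map_prod h h (a,b) \<in> map_prod h h ` D'" by (rule imageI)
      then show ?thesis using ab by simp
    next
      assume "(b,a) \<in> D'" then have "map_prod h h (b,a) \<in> map_prod h h ` D'" by (rule imageI)
      then show ?thesis using ab by simp
    qed
  qed
  moreover have "kernel_perfect V (map_prod h h ` D')"
    unfolding kernel_perfect_def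
  proof (intro allI impI)
    fix S assume S: "S \<subseteq> V"
    define S' where "S' = {a\<in>V'. h a \<in> S}"
    have "S' \<subseteq> V'" unfolding S'_def by auto
    then obtain K' where K': "is_kernel D' S' K'" using kp unfolding kernel_perfect_def by blast
    have "is_kernel (map_prod h h ` D') S (h ` K')"
      unfolding is_kernel_def
    proof (intro conjI ballI)
      show "h ` K' \<subseteq> S" using K' unfolding is_kernel_def S'_def by auto
    next
      fix x y assume "x \<in> h ` K'" "y \<in> h ` K'"
      then obtain a b where ab: "a \<in> K'" "b \<in> K'" "x = h a" "y = h b" by auto
      then have "a \<in> V'" "b \<in> V'" using K' unfolding is_kernel_def S'_def by auto
      then have abV: "a \<in> V'" "b \<in> V'" by auto
      show "(x, y) \<notin> map_prod h h ` D'" proof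
        assume "(x, y) \<in> map_prod h h ` D'"
        then have "(a,b) \<in> D'" using img2 ab \<open>a \<in> V'\<close> \<open>b \<in> V'\<close> by simp
        then show False using K' ab unfolding is_kernel_def by blast
      qed
    next
      fix x assume x: "x \<in> S - h ` K'"
      then obtain a where a: "a \<in> V'" "x = h a" using S img by auto
      then have "a \<in> S' - K'" using x S'_def by auto
      then obtain b where b: "b \<in> K'" "(a,b) \<in> D'" using K' unfolding is_kernel_def by blast
      show "\<exists>y\<in>h ` K'. (x, y) \<in> map_prod h h ` D'" proof
        show "h b \<in> h ` K'" using \<open>b \<in> K'\<close> by simp
        have "map_prod h h (a,b) \<in> map_prod h h ` D'" using \<open>(a,b) \<in> D'\<close> by (rule imageI)
        then show "(x, h b) \<in> map_prod h h ` D'" using a by simp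
      qed
    qed
    then show "\<exists>K. is_kernel (map_prod h h ` D') S K" by blast
  qed
  moreover have "\<forall>x\<in>V. f x \<ge> 1 + outdeg V (map_prod h h ` D') x"
  proof
    fix x assume "x \<in> V"
    then obtain a where a: "a \<in> V'" "x = h a" using img by auto
    have "{y \<in> V. (x, y) \<in> map_prod h h ` D'} = h ` {b\<in>V'. (a,b) \<in> D'}"
    proof
      show "{y \<in> V. (x, y) \<in> map_prod h h ` D'} \<subseteq> h ` {b\<in>V'. (a,b) \<in> D'}"
      proof
        fix y assume "y \<in> {y \<in> V. (x, y) \<in> map_prod h h ` D'}"
        then have y: "y \<in> V" "(x, y) \<in> map_prod h h ` D'" by auto
        then obtain b where b: "b \<in> V'" "y = h b" using img by auto
        then have "(h a, h b) \<in> map_prod h h ` D'" using y a by simp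
        then have "(a,b) \<in> D'" by (rule img2[OF _ a(1) b(1)])
        then show "y \<in> h ` {b\<in>V'. (a,b) \<in> D'}" using b by blast
      qed
      have dummy: True by simp
      show "h ` {b\<in>V'. (a,b) \<in> D'} \<subseteq> {y \<in> V. (x, y) \<in> map_prod h h ` D'}"
      proof
        fix y assume "y \<in> h ` {b\<in>V'. (a,b) \<in> D'}"
        then obtain b where b: "b \<in> V'" "(a,b) \<in> D'" "y = h b" by auto
        have "map_prod h h (a,b) \<in> map_prod h h ` D'" using b by (intro imageI)
        then show "y \<in> {y \<in> V. (x, y) \<in> map_prod h h ` D'}" using a b img by auto
      qed
    qed
    moreover have "inj_on h {b\<in>V'. (a,b) \<in> D'}" using inj by (rule inj_on_subset) auto
    ultimately have "outdeg V (map_prod h h ` D') x = outdeg V' D' a"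
      unfolding outdeg_def by (simp add: card_image)
    then show "f x \<ge> 1 + outdeg V (map_prod h h ` D') x" using od a by auto
  qed
  ultimately show ?thesis unfolding f_kernel_perfect_orientation_def by blast
qed


datatype node = E0 | Xn nat | Yn nat

fun h :: "node \<Rightarrow> (nat + nat) set" where
  "h E0 = {Inl 0, Inl 1}"
| "h (Xn i) = {Inl 0, Inr i}"
| "h (Yn i) = {Inl 1, Inr i}"

definition Vn :: "nat \<Rightarrow> node set" where
  "Vn k = insert E0 (Xn ` {..<k} \<union> Yn ` {..<k})"

lemma inj_h: "inj h"
proof (rule injI)
  fix x y assume "h x = h y" then show "x = y"
    by (cases x; cases y) (auto simp: doubleton_eq_iff)
qed

lemma edges_eq: "gedges (gjoin K2 (edgeless k)) = h ` Vn k"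
proof -
  have "gedges (gjoin K2 (edgeless k)) = insert {Inl 0, Inl 1} {{Inl x, Inr y} | (x::nat) (y::nat). x \<in> {0,1} \<and> y < k}"
    unfolding gedges_def gjoin_def K2_def edgeless_def gverts_def by auto
  also have "\<dots> = h ` Vn k"
  proof (rule set_eqI, rule iffI)
    fix e assume "e \<in> insert {Inl 0, Inl 1} {{Inl x, Inr y} | (x::nat) (y::nat). x \<in> {0,1} \<and> y < k}"
    then show "e \<in> h ` Vn k"
    proof
      assume "e = {Inl 0, Inl 1}" then show ?thesis unfolding Vn_def
        by (metis h.simps(1) image_eqI insertI1)
    next
      assume "e \<in> {{Inl x, Inr y} | (x::nat) (y::nat). x \<in> {0,1} \<and> y < k}"
      then obtain x y where "e = {Inl x, Inr y}" "x = 0 \<or> x = 1" "y < k" by auto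
      then show ?thesis unfolding Vn_def
        by (metis (no_types, lifting) UnI1 UnI2 h.simps(2,3) image_eqI insertI2 lessThan_iff)
    qed
  next
    fix e assume "e \<in> h ` Vn k"
    then obtain n where n: "n \<in> Vn k" "e = h n" by auto
    show "e \<in> insert {Inl 0, Inl 1} {{Inl x, Inr y} | (x::nat) (y::nat). x \<in> {0,1} \<and> y < k}"
    proof (cases n)
      case E0 then show ?thesis using n by simp
    next
      case (Xn i) then have "i < k" using n unfolding Vn_def by auto
      then show ?thesis using n Xn by simp blast
    next
      case (Yn i) then have "i < k" using n unfolding Vn_def by auto
      then show ?thesis using n Yn by simp blast
    qed
  qed
  finally show ?thesis .
qed

lemma verts_eq: "gverts (gjoin K2 (edgeless k)) = {Inl 0, Inl 1} \<union> Inr ` {..<k}"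
  unfolding gjoin_def K2_def edgeless_def gverts_def by auto

fun share :: "node \<Rightarrow> node \<Rightarrow> bool" where
  "share E0 _ = True"
| "share (Xn i) E0 = True"
| "share (Xn i) (Xn l) = True"
| "share (Xn i) (Yn l) = (i = l)"
| "share (Yn i) E0 = True"
| "share (Yn i) (Xn l) = (i = l)"
| "share (Yn i) (Yn l) = True"

lemma share_iff: "(h x \<inter> h y \<noteq> {}) = share x y"
  by (cases x; cases y) auto

lemma adj_iff: "line_adj (h ` V) (h x) (h y) = (x \<in> V \<and> y \<in> V \<and> x \<noteq> y \<and> share x y)"
  unfolding line_adj_def using inj_h share_iff[of x y]
  by (auto simp: inj_image_mem_iff inj_eq)



definition P :: "nat \<Rightarrow> nat \<Rightarrow> nat \<Rightarrow> bool" where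
  "P k j i \<longleftrightarrow> card ({..<i} - {j}) < card ({i<..<k} - {j})"

fun arc :: "nat \<Rightarrow> nat \<Rightarrow> node \<Rightarrow> node \<Rightarrow> bool" where
  "arc k j E0 y = (y = Xn j \<or> y = Yn j)"
| "arc k j (Xn i) y = (i \<noteq> j \<and> (y = Xn j \<or> y = E0 \<or> (\<exists>l. y = Xn l \<and> l < i) \<or> (y = Yn i \<and> P k j i)))"
| "arc k j (Yn i) y = (if i = j then y = Xn j else
     (y = Yn j \<or> y = E0 \<or> (\<exists>l. y = Yn l \<and> i < l \<and> l < k) \<or> (y = Xn i \<and> \<not> P k j i)))"

definition Dj :: "nat \<Rightarrow> nat \<Rightarrow> (node \<times> node) set" where
  "Dj k j = {(x,y). x \<in> Vn k \<and> y \<in> Vn k \<and> arc k j x y}"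

definition adjn :: "nat \<Rightarrow> node \<Rightarrow> node \<Rightarrow> bool" where
  "adjn k x y = (x \<in> Vn k \<and> y \<in> Vn k \<and> x \<noteq> y \<and> share x y)"

lemma card_ins2: "finite A \<Longrightarrow> card (insert a (insert b A)) \<le> 2 + card A"
  by (simp add: card_insert_if)

lemma orient: assumes "j < k" shows "is_orientation (Vn k) (adjn k) (Dj k j)"
  unfolding is_orientation_def
proof (rule conjI; intro allI impI ballI)
  fix x y assume "(x,y) \<in> Dj k j"
  then show "x \<in> Vn k \<and> y \<in> Vn k \<and> adjn k x y"
    unfolding Dj_def adjn_def by (cases x; cases y) (auto split: if_splits)
next
  fix x y assume xy: "x \<in> Vn k" "y \<in> Vn k" "adjn k x y"
  then show "(x,y) \<in> Dj k j \<or> (y,x) \<in> Dj k j"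
    unfolding Dj_def adjn_def using assms
    by (cases x; cases y) (auto simp: Vn_def)
qed

lemma card_split: assumes "i < k" "j < k" "i \<noteq> j"
  shows "card ({..<i} - {j}) + card ({i<..<k} - {j}) + 2 = k"
proof -
  have "({..<i} - {j}) \<union> ({i<..<k} - {j}) = {..<k} - {i,j}" using assms by auto
  moreover have "card ({..<k} - {i,j}) = k - 2"
    using assms by (subst card_Diff_subset) auto
  moreover have "card (({..<i} - {j}) \<union> ({i<..<k} - {j})) = card ({..<i} - {j}) + card ({i<..<k} - {j})"
    by (rule card_Un_disjoint) auto
  ultimately show ?thesis using assms by simp
qed

lemma outX: assumes "i < k" "j < k" "i \<noteq> j"
  shows "outdeg (Vn k) (Dj k j) (Xn i) \<le> 2 + card ({..<i} - {j}) + (if P k j i then 1 else 0)"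
proof -
  have "{y \<in> Vn k. (Xn i, y) \<in> Dj k j} \<subseteq> insert (Xn j) (insert E0 (Xn ` ({..<i} - {j}) \<union> (if P k j i then {Yn i} else {})))"
    unfolding Dj_def using assms by auto
  then have "outdeg (Vn k) (Dj k j) (Xn i) \<le> card (insert (Xn j) (insert E0 (Xn ` ({..<i} - {j}) \<union> (if P k j i then {Yn i} else {}))))"
    unfolding outdeg_def by (intro card_mono) auto
  also have "\<dots> \<le> 2 + card (Xn ` ({..<i} - {j}) \<union> (if P k j i then {Yn i} else {}))"
    by (rule card_ins2) auto
  also have "\<dots> \<le> 2 + (card (Xn ` ({..<i} - {j})) + card (if P k j i then {Yn i} else {}))"
    by (intro add_left_mono card_Un_le)
  also have "\<dots> \<le> 2 + card ({..<i} - {j}) + (if P k j i then 1 else 0)"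
    using card_image_le[of "{..<i} - {j}" Xn] by auto
  finally show ?thesis .
qed

lemma outY: assumes "i < k" "j < k" "i \<noteq> j"
  shows "outdeg (Vn k) (Dj k j) (Yn i) \<le> 2 + card ({i<..<k} - {j}) + (if P k j i then 0 else 1)"
proof -
  have "{y \<in> Vn k. (Yn i, y) \<in> Dj k j} \<subseteq> insert (Yn j) (insert E0 (Yn ` ({i<..<k} - {j}) \<union> (if P k j i then {} else {Xn i})))"
    unfolding Dj_def using assms by auto
  then have "outdeg (Vn k) (Dj k j) (Yn i) \<le> card (insert (Yn j) (insert E0 (Yn ` ({i<..<k} - {j}) \<union> (if P k j i then {} else {Xn i}))))"
    unfolding outdeg_def by (intro card_mono) auto
  also have "\<dots> \<le> 2 + card (Yn ` ({i<..<k} - {j}) \<union> (if P k j i then {} else {Xn i}))"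
    by (rule card_ins2) auto
  also have "\<dots> \<le> 2 + (card (Yn ` ({i<..<k} - {j})) + card (if P k j i then {} else {Xn i}))"
    by (intro add_left_mono card_Un_le)
  also have "\<dots> \<le> 2 + card ({i<..<k} - {j}) + (if P k j i then 0 else 1)"
    using card_image_le[of "{i<..<k} - {j}" Yn] by auto
  finally show ?thesis .
qed



lemma Vn_mem[simp]: "E0 \<in> Vn k" "Xn i \<in> Vn k \<longleftrightarrow> i < k" "Yn i \<in> Vn k \<longleftrightarrow> i < k"
  by (auto simp: Vn_def)

lemma kern_intro: assumes "S \<subseteq> Vn k" "K \<subseteq> S" "\<And>x y. x\<in>K \<Longrightarrow> y\<in>K \<Longrightarrow> \<not> arc k j x y"
  "\<And>x. x\<in>S \<Longrightarrow> x\<notin>K \<Longrightarrow> \<exists>y\<in>K. arc k j x y"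
  shows "is_kernel (Dj k j) S K"
  unfolding is_kernel_def Dj_def using assms by blast

lemma kernel: assumes jk: "j < k" and S: "S \<subseteq> Vn k" shows "\<exists>K. is_kernel (Dj k j) S K"
proof -
  have inS: "\<And>i. Xn i \<in> S \<Longrightarrow> i < k" "\<And>i. Yn i \<in> S \<Longrightarrow> i < k" using S by auto
  define SX where "SX = {l. Xn l \<in> S \<and> l \<noteq> j}"
  define SY where "SY = {l. Yn l \<in> S \<and> l \<noteq> j}"
  have fin: "finite SX" "finite SY"
    by (rule finite_subset[of _ "{..<k}"], auto simp: SX_def SY_def inS)+
  show ?thesis
  proof (cases "Xn j \<in> S")
    case True
    show ?thesis
    proof (cases "SY = {}")
      case True
      show ?thesis
      proof (intro exI[of _ "{Xn j}"] kern_intro[OF S])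
        show "{Xn j} \<subseteq> S" using \<open>Xn j \<in> S\<close> by auto
      next
        fix x y assume "x \<in> {Xn j}" "y \<in> {Xn j}" then show "\<not> arc k j x y" by auto
      next
        fix x assume "x \<in> S" "x \<notin> {Xn j}"
        then show "\<exists>y\<in>{Xn j}. arc k j x y" using True by (cases x) (auto simp: SY_def)
      qed
    next
      case False
      define n where "n = Max SY"
      have n: "n \<in> SY" "\<And>l. l \<in> SY \<Longrightarrow> l \<le> n" using False fin unfolding n_def by auto
      then have nk: "n < k" "n \<noteq> j" "Yn n \<in> S" using inS unfolding SY_def by auto
      show ?thesis
      proof (intro exI[of _ "{Xn j, Yn n}"] kern_intro[OF S])
        show "{Xn j, Yn n} \<subseteq> S" using \<open>Xn j \<in> S\<close> nk by auto
      next
        fix x y assume "x \<in> {Xn j, Yn n}" "y \<in> {Xn j, Yn n}" then show "\<not> arc k j x y" using nk by auto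
      next
        fix x assume x: "x \<in> S" "x \<notin> {Xn j, Yn n}"
        then show "\<exists>y\<in>{Xn j, Yn n}. arc k j x y"
        proof (cases x)
          case (Yn i)
          show ?thesis
          proof (cases "i = j")
            case False
            then have "i \<in> SY" using x Yn unfolding SY_def by auto
            then have "i < n" using n(2)[of i] x Yn by (auto simp: le_less)
            then show ?thesis using Yn False nk by auto
          qed (use Yn in auto)
        qed auto
      qed
    qed
  next
    case notX: False
    show ?thesis
    proof (cases "Yn j \<in> S")
      case True
      show ?thesis
      proof (cases "SX = {}")
        case True
        show ?thesis
        proof (intro exI[of _ "{Yn j}"] kern_intro[OF S])
          show "{Yn j} \<subseteq> S" using \<open>Yn j \<in> S\<close> by auto
        next
          fix x y assume "x \<in> {Yn j}" "y \<in> {Yn j}" then show "\<not> arc k j x y" by auto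
        next
          fix x assume "x \<in> S" "x \<notin> {Yn j}"
          then show "\<exists>y\<in>{Yn j}. arc k j x y" using True notX by (cases x) (auto simp: SX_def)
        qed
      next
        case False
        define m where "m = Min SX"
        have m: "m \<in> SX" "\<And>l. l \<in> SX \<Longrightarrow> m \<le> l" using False fin unfolding m_def by auto
        then have mk: "m < k" "m \<noteq> j" "Xn m \<in> S" using inS unfolding SX_def by auto
        show ?thesis
        proof (intro exI[of _ "{Yn j, Xn m}"] kern_intro[OF S])
          show "{Yn j, Xn m} \<subseteq> S" using \<open>Yn j \<in> S\<close> mk by auto
        next
          fix x y assume "x \<in> {Yn j, Xn m}" "y \<in> {Yn j, Xn m}" then show "\<not> arc k j x y" using mk by auto
        next
          fix x assume x: "x \<in> S" "x \<notin> {Yn j, Xn m}"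
          then show "\<exists>y\<in>{Yn j, Xn m}. arc k j x y"
          proof (cases x)
            case (Xn i)
            then have "i \<in> SX" "i \<noteq> j" using x notX unfolding SX_def by auto
            then have "m < i" using m(2)[of i] x Xn by (auto simp: le_less)
            then show ?thesis using Xn \<open>i \<noteq> j\<close> by auto
          qed auto
        qed
      qed
    next
      case notY: False
      show ?thesis
      proof (cases "E0 \<in> S")
        case True
        show ?thesis
        proof (intro exI[of _ "{E0}"] kern_intro[OF S])
          show "{E0} \<subseteq> S" using True by auto
        next
          fix x y assume "x \<in> {E0}" "y \<in> {E0}" then show "\<not> arc k j x y" by auto
        next
          fix x assume "x \<in> S" "x \<notin> {E0}"
          then show "\<exists>y\<in>{E0}. arc k j x y" using notX notY by (cases x) auto
        qed
      next
        case notE: False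
        have Sx: "\<And>x. x \<in> S \<Longrightarrow> (\<exists>i. x = Xn i \<and> i \<in> SX) \<or> (\<exists>i. x = Yn i \<and> i \<in> SY)"
        proof -
          fix x assume "x \<in> S" then show "(\<exists>i. x = Xn i \<and> i \<in> SX) \<or> (\<exists>i. x = Yn i \<and> i \<in> SY)"
            using notX notY notE unfolding SX_def SY_def by (cases x) auto
        qed
        have SXk: "\<And>i. i \<in> SX \<Longrightarrow> i < k \<and> i \<noteq> j \<and> Xn i \<in> S" using inS unfolding SX_def by auto
        have SYk: "\<And>i. i \<in> SY \<Longrightarrow> i < k \<and> i \<noteq> j \<and> Yn i \<in> S" using inS unfolding SY_def by auto
        define m where "m = Min SX"
        define n where "n = Max SY"
        have m: "SX \<noteq> {} \<Longrightarrow> m \<in> SX" "\<And>l. l \<in> SX \<Longrightarrow> m \<le> l" using fin unfolding m_def by auto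
        have n: "SY \<noteq> {} \<Longrightarrow> n \<in> SY" "\<And>l. l \<in> SY \<Longrightarrow> l \<le> n" using fin unfolding n_def by auto
        show ?thesis
        proof (cases "SX = {}")
          case SXe: True
          show ?thesis
          proof (cases "SY = {}")
            case True
            have "S = {}" using Sx SXe True by blast
            then show ?thesis
              by (intro exI[of _ "{}"] kern_intro[OF S]) auto
          next
            case False
            have nn: "n < k" "n \<noteq> j" "Yn n \<in> S" using SYk n(1) False by auto
            show ?thesis
            proof (intro exI[of _ "{Yn n}"] kern_intro[OF S])
              show "{Yn n} \<subseteq> S" using nn by auto
            next
              fix x y assume "x \<in> {Yn n}" "y \<in> {Yn n}" then show "\<not> arc k j x y" using nn by auto
            next
              fix x assume x: "x \<in> S" "x \<notin> {Yn n}"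
              then obtain i where i: "x = Yn i" "i \<in> SY" using Sx SXe by blast
              then have "i < n" using n(2)[of i] x by (auto simp: le_less)
              then show "\<exists>y\<in>{Yn n}. arc k j x y" using i SYk nn by auto
            qed
          qed
        next
          case SXne: False
          have mm: "m < k" "m \<noteq> j" "Xn m \<in> S" using SXk m(1) SXne by auto
          show ?thesis
          proof (cases "SY = {}")
            case SYe: True
            show ?thesis
            proof (intro exI[of _ "{Xn m}"] kern_intro[OF S])
              show "{Xn m} \<subseteq> S" using mm by auto
            next
              fix x y assume "x \<in> {Xn m}" "y \<in> {Xn m}" then show "\<not> arc k j x y" using mm by auto
            next
              fix x assume x: "x \<in> S" "x \<notin> {Xn m}"
              then obtain i where i: "x = Xn i" "i \<in> SX" using Sx SYe by blast
              then have "m < i" using m(2)[of i] x by (auto simp: le_less)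
              then show "\<exists>y\<in>{Xn m}. arc k j x y" using i SXk mm by auto
            qed
          next
            case SYne: False
            have nn: "n < k" "n \<noteq> j" "Yn n \<in> S" using SYk n(1) SYne by auto
            show ?thesis
            proof (cases "m = n")
              case False
              show ?thesis
              proof (intro exI[of _ "{Xn m, Yn n}"] kern_intro[OF S])
                show "{Xn m, Yn n} \<subseteq> S" using mm nn by auto
              next
                fix x y assume "x \<in> {Xn m, Yn n}" "y \<in> {Xn m, Yn n}" then show "\<not> arc k j x y"
                  using mm nn False by auto
              next
                fix x assume x: "x \<in> S" "x \<notin> {Xn m, Yn n}"
                show "\<exists>y\<in>{Xn m, Yn n}. arc k j x y"
                  using Sx[OF x(1)]
                proof
                  assume "\<exists>i. x = Xn i \<and> i \<in> SX"
                  then obtain i where i: "x = Xn i" "i \<in> SX" by blast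
                  then have "m < i" using m(2)[of i] x by (auto simp: le_less)
                  then show ?thesis using i SXk mm by auto
                next
                  assume "\<exists>i. x = Yn i \<and> i \<in> SY"
                  then obtain i where i: "x = Yn i" "i \<in> SY" by blast
                  then have "i < n" using n(2)[of i] x by (auto simp: le_less)
                  then show ?thesis using i SYk nn by auto
                qed
              qed
            next
              case mn: True
              show ?thesis
              proof (cases "P k j m")
                case Pm: True
                define K where "K = insert (Yn m) (if SX - {m} = {} then {} else {Xn (Min (SX - {m}))})"
                have m2a: "SX - {m} \<noteq> {} \<Longrightarrow> Min (SX - {m}) \<in> SX - {m}" using fin by (intro Min_in) auto
                have m2b: "\<And>l. l \<in> SX - {m} \<Longrightarrow> Min (SX - {m}) \<le> l" using fin by (intro Min_le) auto
                note m2 = m2a m2b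
                show ?thesis
                proof (intro exI[of _ K] kern_intro[OF S])
                  show "K \<subseteq> S" unfolding K_def using nn mn m2(1) SXk by auto
                next
                  fix x y assume "x \<in> K" "y \<in> K" then show "\<not> arc k j x y"
                    unfolding K_def using mm nn mn m2(1) SXk by (auto split: if_splits)
                next
                  fix x assume x: "x \<in> S" "x \<notin> K"
                  show "\<exists>y\<in>K. arc k j x y"
                    using Sx[OF x(1)]
                  proof
                    assume "\<exists>i. x = Xn i \<and> i \<in> SX"
                    then obtain i where i: "x = Xn i" "i \<in> SX" by blast
                    show ?thesis
                    proof (cases "i = m")
                      case True then show ?thesis using i Pm mm unfolding K_def by auto
                    next
                      case False
                      then have ne: "SX - {m} \<noteq> {}" and iin: "i \<in> SX - {m}" using i by auto
                      then have "Min (SX - {m}) < i" using m2(2)[of i] x i ne unfolding K_def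
                        by (auto simp: le_less)
                      then show ?thesis using i SXk ne unfolding K_def by auto
                    qed
                  next
                    assume "\<exists>i. x = Yn i \<and> i \<in> SY"
                    then obtain i where i: "x = Yn i" "i \<in> SY" by blast
                    then have "i < n" using n(2)[of i] x mn unfolding K_def by (auto simp: le_less)
                    then show ?thesis using i SYk nn mn unfolding K_def by auto
                  qed
                qed
              next
                case Pm: False
                define K where "K = insert (Xn m) (if SY - {m} = {} then {} else {Yn (Max (SY - {m}))})"
                have n2a: "SY - {m} \<noteq> {} \<Longrightarrow> Max (SY - {m}) \<in> SY - {m}" using fin by (intro Max_in) auto
                have n2b: "\<And>l. l \<in> SY - {m} \<Longrightarrow> l \<le> Max (SY - {m})" using fin by (intro Max_ge) auto
                note n2 = n2a n2b
                show ?thesis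
                proof (intro exI[of _ K] kern_intro[OF S])
                  show "K \<subseteq> S" unfolding K_def using mm n2(1) SYk by auto
                next
                  fix x y assume "x \<in> K" "y \<in> K" then show "\<not> arc k j x y"
                    unfolding K_def using mm nn mn n2(1) SYk by (auto split: if_splits)
                next
                  fix x assume x: "x \<in> S" "x \<notin> K"
                  show "\<exists>y\<in>K. arc k j x y"
                    using Sx[OF x(1)]
                  proof
                    assume "\<exists>i. x = Yn i \<and> i \<in> SY"
                    then obtain i where i: "x = Yn i" "i \<in> SY" by blast
                    show ?thesis
                    proof (cases "i = m")
                      case True then show ?thesis using i Pm mm unfolding K_def by auto
                    next
                      case False
                      then have ne: "SY - {m} \<noteq> {}" and iin: "i \<in> SY - {m}" using i by auto
                      then have "i < Max (SY - {m})" using n2(2)[of i] x i ne unfolding K_def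
                        by (auto simp: le_less)
                      moreover have "Max (SY - {m}) < k" using n2(1)[OF ne] SYk by auto
                      ultimately show ?thesis using i SYk ne unfolding K_def by auto
                    qed
                  next
                    assume "\<exists>i. x = Xn i \<and> i \<in> SX"
                    then obtain i where i: "x = Xn i" "i \<in> SX" by blast
                    then have "m < i" using m(2)[of i] x unfolding K_def by (auto simp: le_less)
                    then show ?thesis using i SXk unfolding K_def by auto
                  qed
                qed
              qed
            qed
          qed
        qed
      qed
    qed
  qed
qed



abbreviation "GG k \<equiv> gjoin K2 (edgeless k)"

lemma degA: "degree (h ` Vn k) (Inl 0) = k + 1"
proof -
  have "{e \<in> h ` Vn k. Inl 0 \<in> e} = h ` (insert E0 (Xn ` {..<k}))"
    unfolding Vn_def by auto
  moreover have "card (h ` (insert E0 (Xn ` {..<k}))) = k + 1"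
    by (subst card_image[OF inj_on_subset[OF inj_h]]; simp add: card_image image_iff inj_on_def)
  ultimately show ?thesis unfolding degree_def by simp
qed

lemma degB: "degree (h ` Vn k) (Inl 1) = k + 1"
proof -
  have "{e \<in> h ` Vn k. Inl 1 \<in> e} = h ` (insert E0 (Yn ` {..<k}))"
    unfolding Vn_def by auto
  moreover have "card (h ` (insert E0 (Yn ` {..<k}))) = k + 1"
    by (subst card_image[OF inj_on_subset[OF inj_h]]; simp add: card_image image_iff inj_on_def)
  ultimately show ?thesis unfolding degree_def by simp
qed

lemma maxdeg_ge: "maxdeg (GG k) \<ge> k + 1"
proof -
  have "degree (gedges (GG k)) (Inl 0) \<le> maxdeg (GG k)"
    unfolding maxdeg_def by (rule Max_ge) (auto simp: verts_eq)
  then show ?thesis using degA edges_eq by simp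
qed

lemma adjn_eq: "x \<in> Vn k \<Longrightarrow> y \<in> Vn k \<Longrightarrow> line_adj (h ` Vn k) (h x) (h y) = adjn k x y"
  unfolding adjn_def by (rule adj_iff)

lemma Dj_sub: "Dj k j \<subseteq> Vn k \<times> Vn k" unfolding Dj_def by auto

lemma main_C:
  assumes jk: "j < k" and p4: "p \<ge> 4" and pk: "p \<ge> k + 1"
  shows "f_kernel_perfect_orientation (Vn k) (adjn k) (\<lambda>x. if Inr j \<in> h x then 2 else p) (Dj k j)"
  unfolding f_kernel_perfect_orientation_def
proof (intro conjI)
  show "is_orientation (Vn k) (adjn k) (Dj k j)" using orient[OF jk] .
  show "kernel_perfect (Vn k) (Dj k j)" unfolding kernel_perfect_def using kernel[OF jk] by blast
  show "\<forall>x\<in>Vn k. (if Inr j \<in> h x then 2 else p) \<ge> 1 + outdeg (Vn k) (Dj k j) x"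
  proof
    fix x assume x: "x \<in> Vn k"
    show "(if Inr j \<in> h x then 2 else p) \<ge> 1 + outdeg (Vn k) (Dj k j) x"
    proof (cases x)
      case E0
      have "{y \<in> Vn k. (E0, y) \<in> Dj k j} \<subseteq> {Xn j, Yn j}" unfolding Dj_def by auto
      then have "outdeg (Vn k) (Dj k j) E0 \<le> card {Xn j, Yn j}" unfolding outdeg_def
        by (intro card_mono) auto
      also have "\<dots> \<le> 2" by (simp add: card_insert_if)
      finally have "outdeg (Vn k) (Dj k j) E0 \<le> 2" .
      then show ?thesis using E0 p4 by simp
    next
      case (Xn i)
      then have ik: "i < k" using x by simp
      show ?thesis
      proof (cases "i = j")
        case True
        have "{y \<in> Vn k. (Xn i, y) \<in> Dj k j} = {}" unfolding Dj_def using True by auto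
        then have "outdeg (Vn k) (Dj k j) (Xn i) = 0" unfolding outdeg_def by (simp only: card.empty)
        then show ?thesis using Xn True by simp
      next
        case False
        have "outdeg (Vn k) (Dj k j) (Xn i) \<le> 2 + card ({..<i} - {j}) + (if P k j i then 1 else 0)"
          using outX[OF ik jk False] .
        moreover have "card ({..<i} - {j}) + card ({i<..<k} - {j}) + 2 = k" using card_split[OF ik jk False] .
        ultimately have "1 + outdeg (Vn k) (Dj k j) (Xn i) \<le> p"
          using p4 pk unfolding P_def by (cases "P k j i"; simp add: P_def; arith)
        then show ?thesis using Xn False by simp
      qed
    next
      case (Yn i)
      then have ik: "i < k" using x by simp
      show ?thesis
      proof (cases "i = j")
        case True
        have "{y \<in> Vn k. (Yn i, y) \<in> Dj k j} \<subseteq> {Xn j}" unfolding Dj_def using True by auto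
        then have "outdeg (Vn k) (Dj k j) (Yn i) \<le> card {Xn j}" unfolding outdeg_def
          by (intro card_mono) auto
        then have "outdeg (Vn k) (Dj k j) (Yn i) \<le> 1" by simp
        then show ?thesis using Yn True by simp
      next
        case False
        have "outdeg (Vn k) (Dj k j) (Yn i) \<le> 2 + card ({i<..<k} - {j}) + (if P k j i then 0 else 1)"
          using outY[OF ik jk False] .
        moreover have "card ({..<i} - {j}) + card ({i<..<k} - {j}) + 2 = k" using card_split[OF ik jk False] .
        ultimately have "1 + outdeg (Vn k) (Dj k j) (Yn i) \<le> p"
          using p4 pk unfolding P_def by (cases "P k j i"; simp add: P_def; arith)
        then show ?thesis using Yn False by simp
      qed
    qed
  qed
qed



lemma V1: "Vn 1 = {E0, Xn 0, Yn 0}" unfolding Vn_def by auto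

lemma main_A: assumes p4: "p \<ge> 4"
  shows "f_kernel_perfect_orientation (Vn 1) (adjn 1) (\<lambda>x. if Inl 0 \<in> h x then 2 else p)
     {(E0, Xn 0), (Yn 0, E0), (Yn 0, Xn 0)}"
  unfolding f_kernel_perfect_orientation_def
proof (intro conjI)
  show "is_orientation (Vn 1) (adjn 1) {(E0, Xn 0), (Yn 0, E0), (Yn 0, Xn 0)}"
    unfolding is_orientation_def adjn_def V1 by auto
  show "kernel_perfect (Vn 1) {(E0, Xn 0), (Yn 0, E0), (Yn 0, Xn 0)}"
    unfolding kernel_perfect_def V1
  proof (intro allI impI)
    fix S assume S: "S \<subseteq> {E0, Xn 0, Yn 0}"
    show "\<exists>K. is_kernel {(E0, Xn 0), (Yn 0, E0), (Yn 0, Xn 0)} S K"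
    proof (cases "Xn 0 \<in> S")
      case True
      have "is_kernel {(E0, Xn 0), (Yn 0, E0), (Yn 0, Xn 0)} S {Xn 0}"
        unfolding is_kernel_def using S True by auto
      then show ?thesis by blast
    next
      case n1: False
      show ?thesis
      proof (cases "E0 \<in> S")
        case True
        have "is_kernel {(E0, Xn 0), (Yn 0, E0), (Yn 0, Xn 0)} S {E0}"
          unfolding is_kernel_def using S True n1 by auto
        then show ?thesis by blast
      next
        case False
        then have "S \<subseteq> {Yn 0}" using S n1 False by auto
        then have "is_kernel {(E0, Xn 0), (Yn 0, E0), (Yn 0, Xn 0)} S S"
          unfolding is_kernel_def by auto
        then show ?thesis by blast
      qed
    qed
  qed
  show "\<forall>x\<in>Vn 1. (if Inl 0 \<in> h x then 2 else p) \<ge> 1 + outdeg (Vn 1) {(E0, Xn 0), (Yn 0, E0), (Yn 0, Xn 0)} x"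
  proof
    fix x assume "x \<in> Vn 1"
    then have "x = E0 \<or> x = Xn 0 \<or> x = Yn 0" unfolding V1 by auto
    have s1: "{y \<in> {E0, Xn 0, Yn 0}. (E0, y) \<in> {(E0, Xn 0), (Yn 0, E0), (Yn 0, Xn 0)}} = {Xn 0}" by auto
    have s2: "{y \<in> {E0, Xn 0, Yn 0}. (Xn 0, y) \<in> {(E0, Xn 0), (Yn 0, E0), (Yn 0, Xn 0)}} = {}" by auto
    have s3: "{y \<in> {E0, Xn 0, Yn 0}. (Yn 0, y) \<in> {(E0, Xn 0), (Yn 0, E0), (Yn 0, Xn 0)}} = {E0, Xn 0}" by auto
    have o1: "outdeg (Vn 1) {(E0, Xn 0), (Yn 0, E0), (Yn 0, Xn 0)} E0 = 1" unfolding outdeg_def V1 s1 by simp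
    have o2: "outdeg (Vn 1) {(E0, Xn 0), (Yn 0, E0), (Yn 0, Xn 0)} (Xn 0) = 0" unfolding outdeg_def V1 s2 by simp
    have o3: "outdeg (Vn 1) {(E0, Xn 0), (Yn 0, E0), (Yn 0, Xn 0)} (Yn 0) = 2" unfolding outdeg_def V1 s3 by simp
    show "(if Inl 0 \<in> h x then 2 else p) \<ge> 1 + outdeg (Vn 1) {(E0, Xn 0), (Yn 0, E0), (Yn 0, Xn 0)} x"
      using \<open>x = E0 \<or> x = Xn 0 \<or> x = Yn 0\<close>
    proof (elim disjE)
      assume "x = E0" then show ?thesis using o1 by simp
    next
      assume "x = Xn 0" then show ?thesis using o1 o2 o3 p4 by simp
    next
      assume "x = Yn 0" then show ?thesis using o1 o2 o3 p4 by simp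
    qed
  qed
qed

lemma main_B: assumes p4: "p \<ge> 4"
  shows "f_kernel_perfect_orientation (Vn 1) (adjn 1) (\<lambda>x. if Inl 1 \<in> h x then 2 else p)
     {(E0, Yn 0), (Xn 0, E0), (Xn 0, Yn 0)}"
  unfolding f_kernel_perfect_orientation_def
proof (intro conjI)
  show "is_orientation (Vn 1) (adjn 1) {(E0, Yn 0), (Xn 0, E0), (Xn 0, Yn 0)}"
    unfolding is_orientation_def adjn_def V1 by auto
  show "kernel_perfect (Vn 1) {(E0, Yn 0), (Xn 0, E0), (Xn 0, Yn 0)}"
    unfolding kernel_perfect_def V1
  proof (intro allI impI)
    fix S assume S: "S \<subseteq> {E0, Xn 0, Yn 0}"
    show "\<exists>K. is_kernel {(E0, Yn 0), (Xn 0, E0), (Xn 0, Yn 0)} S K"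
    proof (cases "Yn 0 \<in> S")
      case True
      have "is_kernel {(E0, Yn 0), (Xn 0, E0), (Xn 0, Yn 0)} S {Yn 0}"
        unfolding is_kernel_def using S True by auto
      then show ?thesis by blast
    next
      case n1: False
      show ?thesis
      proof (cases "E0 \<in> S")
        case True
        have "is_kernel {(E0, Yn 0), (Xn 0, E0), (Xn 0, Yn 0)} S {E0}"
          unfolding is_kernel_def using S True n1 by auto
        then show ?thesis by blast
      next
        case False
        then have "S \<subseteq> {Xn 0}" using S n1 False by auto
        then have "is_kernel {(E0, Yn 0), (Xn 0, E0), (Xn 0, Yn 0)} S S"
          unfolding is_kernel_def by auto
        then show ?thesis by blast
      qed
    qed
  qed
  show "\<forall>x\<in>Vn 1. (if Inl 1 \<in> h x then 2 else p) \<ge> 1 + outdeg (Vn 1) {(E0, Yn 0), (Xn 0, E0), (Xn 0, Yn 0)} x"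
  proof
    fix x assume "x \<in> Vn 1"
    then have "x = E0 \<or> x = Xn 0 \<or> x = Yn 0" unfolding V1 by auto
    have s1: "{y \<in> {E0, Xn 0, Yn 0}. (E0, y) \<in> {(E0, Yn 0), (Xn 0, E0), (Xn 0, Yn 0)}} = {Yn 0}" by auto
    have s2: "{y \<in> {E0, Xn 0, Yn 0}. (Yn 0, y) \<in> {(E0, Yn 0), (Xn 0, E0), (Xn 0, Yn 0)}} = {}" by auto
    have s3: "{y \<in> {E0, Xn 0, Yn 0}. (Xn 0, y) \<in> {(E0, Yn 0), (Xn 0, E0), (Xn 0, Yn 0)}} = {E0, Yn 0}" by auto
    have o1: "outdeg (Vn 1) {(E0, Yn 0), (Xn 0, E0), (Xn 0, Yn 0)} E0 = 1" unfolding outdeg_def V1 s1 by simp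
    have o2: "outdeg (Vn 1) {(E0, Yn 0), (Xn 0, E0), (Xn 0, Yn 0)} (Yn 0) = 0" unfolding outdeg_def V1 s2 by simp
    have o3: "outdeg (Vn 1) {(E0, Yn 0), (Xn 0, E0), (Xn 0, Yn 0)} (Xn 0) = 2" unfolding outdeg_def V1 s3 by simp
    show "(if Inl 1 \<in> h x then 2 else p) \<ge> 1 + outdeg (Vn 1) {(E0, Yn 0), (Xn 0, E0), (Xn 0, Yn 0)} x"
      using \<open>x = E0 \<or> x = Xn 0 \<or> x = Yn 0\<close>
    proof (elim disjE)
      assume "x = E0" then show ?thesis using o1 by simp
    next
      assume "x = Xn 0" then show ?thesis using o1 o2 o3 p4 by simp
    next
      assume "x = Yn 0" then show ?thesis using o1 o2 o3 p4 by simp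
    qed
  qed
qed

theorem mainTheorem17:
  fixes k p :: nat and v :: "nat + nat"
  assumes "k \<ge> 1"
    and "v \<in> gverts (gjoin K2 (edgeless k))"
    and "degree (gedges (gjoin K2 (edgeless k))) v = 2"
    and "p \<ge> max 4 (maxdeg (gjoin K2 (edgeless k)))"
  shows "edge_orientable (gjoin K2 (edgeless k)) (f_pv (gjoin K2 (edgeless k)) p v)"
proof -
  have E: "gedges (GG k) = h ` Vn k" by (rule edges_eq)
  have p4: "p \<ge> 4" and pk: "p \<ge> k + 1" using assms(4) maxdeg_ge[of k] by auto
  have deg: "degree (h ` Vn k) v = 2" using assms(3) E by simp
  have fh: "f_pv (GG k) p v \<circ> h = (\<lambda>x. if v \<in> h x then 2 else p)"
    using deg E by (auto simp: f_pv_def fun_eq_iff)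
  have tr: "\<And>D'. D' \<subseteq> Vn k \<times> Vn k \<Longrightarrow>
      f_kernel_perfect_orientation (Vn k) (adjn k) (\<lambda>x. if v \<in> h x then 2 else p) D' \<Longrightarrow>
      edge_orientable (GG k) (f_pv (GG k) p v)"
  proof -
    fix D' assume D'1: "D' \<subseteq> Vn k \<times> Vn k"
      and D'2: "f_kernel_perfect_orientation (Vn k) (adjn k) (\<lambda>x. if v \<in> h x then 2 else p) D'"
    have "f_kernel_perfect_orientation (h ` Vn k) (line_adj (h ` Vn k)) (f_pv (GG k) p v) (map_prod h h ` D')"
      by (rule transfer[of h "Vn k" "h ` Vn k" D' "line_adj (h ` Vn k)" "adjn k", OF inj_on_subset[OF inj_h] refl D'1 adjn_eq]) (auto simp: fh D'2)
    then show "edge_orientable (GG k) (f_pv (GG k) p v)" unfolding edge_orientable_def E by blast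
  qed
  from assms(2) have "v = Inl 0 \<or> v = Inl 1 \<or> (\<exists>j<k. v = Inr j)" unfolding verts_eq by auto
  then show ?thesis
  proof (elim disjE exE conjE)
    assume v: "v = Inl 0"
    then have k1: "k = 1" using deg degA by simp
    show ?thesis
      by (rule tr[of "{(E0, Xn 0), (Yn 0, E0), (Yn 0, Xn 0)}"]) (use main_A[OF p4] v k1 V1 in auto)
  next
    assume v: "v = Inl 1"
    then have k1: "k = 1" using deg degB by simp
    show ?thesis
      by (rule tr[of "{(E0, Yn 0), (Xn 0, E0), (Xn 0, Yn 0)}"]) (use main_B[OF p4] v k1 V1 in auto)
  next
    fix j assume jk: "j < k" and v: "v = Inr j"
    show ?thesis
      by (rule tr[OF Dj_sub]) (use main_C[OF jk p4 pk] v in simp)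
  qed
qed

end
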